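(* There exist a virtually abelian group $G$ and a finite generating set $S$ of $G$ (with $S=S^{-1}$, $e\notin S$) such that every finite-index free abelian subgroup of $G$ contains an element $g$ with $\kappa(g)>0$ and an element $g'$ with $\kappa(g')<0$, curvature computed with respect to $S$.
   Context: For a group $G$ with finite generating set $S$ ($S=S^{-1}$, $e\notin S$), $|x|$ denotes the word length of $x\in G$ with respect to $S$. For $g\in G$ define $\mathrm{Av}(g)=\frac{1}{|S|}\sum_{a\in S}|a^{-1}ga|$, and for $g\neq e$ define the curvature $\kappa(g)=\frac{|g|-\mathrm{Av}(g)}{|g|}$. *)

theory Defs
  imports "HOL-Algebra.Algebra" "HOL-Algebra.Free_Abelian_Groups" Complex_Main
begin

definition word_prod :: "('a, 'b) monoid_scheme \<Rightarrow> 'a list \<Rightarrow> 'a" where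
  "word_prod G ws = foldr (\<lambda>x y. x \<otimes>\<^bsub>G\<^esub> y) ws \<one>\<^bsub>G\<^esub>"

definition sym_gen_set :: "('a, 'b) monoid_scheme \<Rightarrow> 'a set \<Rightarrow> bool" where
  "sym_gen_set G S \<longleftrightarrow> finite S \<and> S \<subseteq> carrier G \<and> (\<forall>a\<in>S. inv\<^bsub>G\<^esub> a \<in> S)
     \<and> \<one>\<^bsub>G\<^esub> \<notin> S \<and> generate G S = carrier G"

definition word_length :: "('a, 'b) monoid_scheme \<Rightarrow> 'a set \<Rightarrow> 'a \<Rightarrow> nat" where
  "word_length G S x = (LEAST n. \<exists>ws. set ws \<subseteq> S \<and> length ws = n \<and> word_prod G ws = x)"

definition Av :: "('a, 'b) monoid_scheme \<Rightarrow> 'a set \<Rightarrow> 'a \<Rightarrow> real" where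
  "Av G S g = (1 / real (card S)) *
     (\<Sum>a\<in>S. real (word_length G S (inv\<^bsub>G\<^esub> a \<otimes>\<^bsub>G\<^esub> g \<otimes>\<^bsub>G\<^esub> a)))"

(* curvature kappa(g) = (|g| - Av(g)) / |g|, meaningful for g \<noteq> e *)
definition curvature :: "('a, 'b) monoid_scheme \<Rightarrow> 'a set \<Rightarrow> 'a \<Rightarrow> real" where
  "curvature G S g = (real (word_length G S g) - Av G S g) / real (word_length G S g)"

definition finite_index_subgroup :: "('a, 'b) monoid_scheme \<Rightarrow> 'a set \<Rightarrow> bool" where
  "finite_index_subgroup G H \<longleftrightarrow> subgroup H G \<and> finite (rcosets\<^bsub>G\<^esub> H)"

definition virtually_abelian :: "('a, 'b) monoid_scheme \<Rightarrow> bool" where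
  "virtually_abelian G \<longleftrightarrow> group G \<and>
     (\<exists>H. finite_index_subgroup G H \<and> comm_group (G\<lparr>carrier := H\<rparr>))"

(* H is a free abelian subgroup: isomorphic to a free abelian group on some
   (countable) basis set; subgroups of countable groups have countable bases *)
definition free_abelian_subgroup :: "('a, 'b) monoid_scheme \<Rightarrow> 'a set \<Rightarrow> bool" where
  "free_abelian_subgroup G H \<longleftrightarrow> subgroup H G \<and>
     (\<exists>B :: nat set. G\<lparr>carrier := H\<rparr> \<cong> free_Abelian_group B)"

end

theory Submission
  imports Defs "HOL-Library.Countable"
begin

type_synonym T3 = "int \<times> int \<times> bool"

fun mul :: "T3 \<Rightarrow> T3 \<Rightarrow> T3" where
  "mul (x1,y1,e1) (x2,y2,e2) =
     (if e1 then (x1+y2, y1+x2, e1 \<noteq> e2) else (x1+x2, y1+y2, e1 \<noteq> e2))"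

fun tinv :: "T3 \<Rightarrow> T3" where
  "tinv (x,y,e) = (if e then (-y,-x,e) else (-x,-y,e))"

abbreviation E :: "T3 \<Rightarrow> nat" where "E \<equiv> to_nat"

definition GG :: "nat monoid" where
  "GG = \<lparr>carrier = range E, monoid.mult = (\<lambda>a b. E (mul (from_nat a) (from_nat b))),
         one = E (0,0,False)\<rparr>"

lemma carrier_GG: "carrier GG = range E" by (simp add: GG_def)
lemma mult_GG[simp]: "E p \<otimes>\<^bsub>GG\<^esub> E q = E (mul p q)" by (simp add: GG_def)
lemma one_GG: "\<one>\<^bsub>GG\<^esub> = E (0,0,False)" by (simp add: GG_def)
lemma E_in[simp]: "E p \<in> carrier GG" by (simp add: GG_def)
lemma E_eq[simp]: "(E p = E q) = (p = q)" by simp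

lemma mul_assoc: "mul (mul p q) r = mul p (mul q r)"
  by (cases p; cases q; cases r) auto

lemma group_GG: "group GG"
proof (rule groupI)
  fix x y assume "x \<in> carrier GG" "y \<in> carrier GG"
  then show "x \<otimes>\<^bsub>GG\<^esub> y \<in> carrier GG" by (auto simp: carrier_GG)
next
  show "\<one>\<^bsub>GG\<^esub> \<in> carrier GG" by (simp add: one_GG)
next
  fix x y z assume "x \<in> carrier GG" "y \<in> carrier GG" "z \<in> carrier GG"
  then show "x \<otimes>\<^bsub>GG\<^esub> y \<otimes>\<^bsub>GG\<^esub> z = x \<otimes>\<^bsub>GG\<^esub> (y \<otimes>\<^bsub>GG\<^esub> z)"
    by (auto simp: carrier_GG mul_assoc)
next
  fix x assume "x \<in> carrier GG"
  then obtain p where "x = E p" by (auto simp: carrier_GG)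
  then show "\<one>\<^bsub>GG\<^esub> \<otimes>\<^bsub>GG\<^esub> x = x" by (cases p) (simp add: one_GG)
next
  fix x assume "x \<in> carrier GG"
  then obtain p where "x = E p" by (auto simp: carrier_GG)
  then show "\<exists>y\<in>carrier GG. y \<otimes>\<^bsub>GG\<^esub> x = \<one>\<^bsub>GG\<^esub>"
    by (intro bexI[of _ "E (tinv p)"]) (cases p, auto simp: one_GG)
qed

lemma inv_GG[simp]: "inv\<^bsub>GG\<^esub> (E p) = E (tinv p)"
proof -
  interpret group GG by (rule group_GG)
  show ?thesis
    by (rule inv_equality) (cases p, auto simp: one_GG)
qed


definition "SS = {E (1,0,False), E (-1,0,False), E (0,0,True)}"

lemma SS_cases: "s \<in> SS \<Longrightarrow> s = E (1,0,False) \<or> s = E (-1,0,False) \<or> s = E (0,0,True)"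
  by (auto simp: SS_def)

lemma wp_nil[simp]: "word_prod GG [] = E (0,0,False)"
  by (simp add: word_prod_def one_GG)
lemma wp_cons[simp]: "word_prod GG (s # ws) = s \<otimes>\<^bsub>GG\<^esub> word_prod GG ws"
  by (simp add: word_prod_def)

definition pot :: "T3 \<Rightarrow> nat" where
  "pot p = (case p of (x,y,e) \<Rightarrow> nat \<bar>x\<bar> + nat \<bar>y\<bar> + (if y \<noteq> 0 then 1 else 0))"

lemma pot_word: "set ws \<subseteq> SS \<Longrightarrow> \<exists>p. word_prod GG ws = E p \<and> pot p \<le> length ws"
proof (induction ws)
  case Nil then show ?case by (auto simp: pot_def)
next
  case (Cons s ws)
  then obtain p where p: "word_prod GG ws = E p" "pot p \<le> length ws" by auto
  obtain x y e where pe: "p = (x,y,e)" by (cases p)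
  from Cons.prems have "s \<in> SS" by auto
  then consider "s = E (1,0,False)" | "s = E (-1,0,False)" | "s = E (0,0,True)"
    using SS_cases by blast
  then show ?case
  proof cases
    case 1 then show ?thesis using p pe
      by (intro exI[of _ "(1+x,y,e)"]) (auto simp: pot_def split: if_splits)
  next
    case 2 then show ?thesis using p pe
      by (intro exI[of _ "(-1+x,y,e)"]) (auto simp: pot_def split: if_splits)
  next
    case 3 then show ?thesis using p pe
      by (intro exI[of _ "(y,x,\<not>e)"]) (auto simp: pot_def split: if_splits)
  qed
qed

definition "W p \<longleftrightarrow> (\<exists>ws. set ws \<subseteq> SS \<and> word_prod GG ws = E p)"

lemma wl_upper: "set ws \<subseteq> SS \<Longrightarrow> word_prod GG ws = g \<Longrightarrow> word_length GG SS g \<le> length ws"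
  unfolding word_length_def by (rule Least_le) auto

lemma wl_lower: "W p \<Longrightarrow> pot p \<le> word_length GG SS (E p)"
proof -
  assume "W p"
  then have "\<exists>n ws. set ws \<subseteq> SS \<and> length ws = n \<and> word_prod GG ws = E p"
    by (auto simp: W_def)
  then have "\<exists>ws. set ws \<subseteq> SS \<and> length ws = word_length GG SS (E p) \<and> word_prod GG ws = E p"
    unfolding word_length_def by (rule LeastI_ex)
  then obtain ws where ws: "set ws \<subseteq> SS" "length ws = word_length GG SS (E p)" "word_prod GG ws = E p"
    by blast
  from pot_word[OF ws(1)] ws(2,3) show ?thesis by auto
qed

lemma W_mul: "W p \<Longrightarrow> E s \<in> SS \<Longrightarrow> W (mul s p)"
  unfolding W_def
proof -
  assume "\<exists>ws. set ws \<subseteq> SS \<and> word_prod GG ws = E p" "E s \<in> SS"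
  then obtain ws where "set ws \<subseteq> SS" "word_prod GG ws = E p" by blast
  then show "\<exists>ws. set ws \<subseteq> SS \<and> word_prod GG ws = E (mul s p)"
    using \<open>E s \<in> SS\<close> by (intro exI[of _ "E s # ws"]) auto
qed

lemma W_shift: "W (x,y,e) \<Longrightarrow> W (x + int m, y, e) \<and> W (x - int m, y, e)"
proof (induction m)
  case 0 then show ?case by simp
next
  case (Suc m)
  then have h: "W (x + int m, y, e)" "W (x - int m, y, e)" by auto
  have "W (mul (1,0,False) (x + int m, y, e))" by (rule W_mul[OF h(1)]) (simp add: SS_def)
  moreover have "W (mul (-1,0,False) (x - int m, y, e))" by (rule W_mul[OF h(2)]) (simp add: SS_def)
  ultimately show ?case by (simp add: algebra_simps)
qed

lemma W_shift_int: "W (x,y,e) \<Longrightarrow> W (x + n, y, e)"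
proof (cases "n \<ge> 0")
  case True
  assume "W (x,y,e)"
  from W_shift[OF this, of "nat n"] True show ?thesis by simp
next
  case False
  assume "W (x,y,e)"
  from W_shift[OF this, of "nat (-n)"] False show ?thesis by simp
qed

lemma W_all: "W p"
proof -
  obtain x y e where pe: "p = (x,y,e)" by (cases p)
  have W0: "W (0,0,b)" for b
  proof (cases b)
    case False then show ?thesis unfolding W_def by (intro exI[of _ "[]"]) auto
  next
    case True
    have "W (0,0,False)" unfolding W_def by (intro exI[of _ "[]"]) auto
    from W_mul[OF this, of "(0,0,True)"] True show ?thesis by (simp add: SS_def)
  qed
  have "W (0 + y, 0, \<not>e)" by (rule W_shift_int[OF W0])
  from W_mul[OF this, of "(0,0,True)"] have "W (0, y, e)" by (simp add: SS_def)
  from W_shift_int[OF this, of x] show ?thesis using pe by simp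
qed

lemma wp_rep: "word_prod GG (replicate m (E (1,0,False))) = E (int m, 0, False)"
  by (induction m) (auto simp: algebra_simps)

lemma wp_gen: "set ws \<subseteq> SS \<Longrightarrow> word_prod GG ws \<in> generate GG SS"
proof (induction ws)
  case Nil then show ?case using generate.one[of GG SS] by (simp add: one_GG)
next
  case (Cons s ws) then show ?case by (auto intro: generate.eng generate.incl)
qed


lemma sym_gen_SS: "sym_gen_set GG SS"
proof -
  interpret group GG by (rule group_GG)
  have "generate GG SS = carrier GG"
  proof
    show "generate GG SS \<subseteq> carrier GG"
      using generate_in_carrier[of SS] by (auto simp: SS_def)
  next
    show "carrier GG \<subseteq> generate GG SS"
    proof
      fix g assume "g \<in> carrier GG"
      then obtain p where "g = E p" by (auto simp: carrier_GG)
      with W_all[of p] obtain ws where "set ws \<subseteq> SS" "word_prod GG ws = g" by (auto simp: W_def)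
      then show "g \<in> generate GG SS" using wp_gen by metis
    qed
  qed
  then show ?thesis
    unfolding sym_gen_set_def by (auto simp: SS_def one_GG)
qed

definition "C b = E ` {p. snd (snd p) = b}"

lemma coset_C: "C False #>\<^bsub>GG\<^esub> E (x,y,e) = C e"
proof
  show "C False #>\<^bsub>GG\<^esub> E (x,y,e) \<subseteq> C e"
    by (auto simp: r_coset_def C_def)
next
  show "C e \<subseteq> C False #>\<^bsub>GG\<^esub> E (x,y,e)"
  proof
    fix g assume "g \<in> C e"
    then obtain u v where g: "g = E (u,v,e)" by (auto simp: C_def)
    have "g = E (u - x, v - y, False) \<otimes>\<^bsub>GG\<^esub> E (x,y,e)" using g by simp
    moreover have "E (u - x, v - y, False) \<in> C False" by (auto simp: C_def)
    ultimately show "g \<in> C False #>\<^bsub>GG\<^esub> E (x,y,e)" unfolding r_coset_def by blast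
  qed
qed

lemma rc_C: "RCOSETS GG (C False) \<subseteq> {C True, C False}"
proof
  fix Y assume "Y \<in> RCOSETS GG (C False)"
  then obtain g where "g \<in> carrier GG" "Y = C False #>\<^bsub>GG\<^esub> g" by (auto simp: RCOSETS_def)
  then obtain x y e where "Y = C False #>\<^bsub>GG\<^esub> E (x,y,e)" by (auto simp: carrier_GG)
  then show "Y \<in> {C True, C False}" using coset_C by (cases e) auto
qed

lemma virt_ab: "virtually_abelian GG"
proof -
  interpret group GG by (rule group_GG)
  have sub: "subgroup (C False) GG"
  proof (rule subgroupI)
    show "C False \<subseteq> carrier GG" by (auto simp: C_def)
    show "C False \<noteq> {}" by (auto simp: C_def)
    show "inv\<^bsub>GG\<^esub> a \<in> C False" if "a \<in> C False" for a
      using that by (auto simp: C_def)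
    show "a \<otimes>\<^bsub>GG\<^esub> b \<in> C False" if "a \<in> C False" "b \<in> C False" for a b
      using that by (auto simp: C_def)
  qed
  note rc = rc_C
  define K where "K = GG\<lparr>carrier := C False\<rparr>"
  have "comm_group K"
    unfolding K_def
    by (rule group.group_comm_groupI[OF subgroup_imp_group[OF sub]]) (auto simp: C_def add.commute)
  then show ?thesis unfolding virtually_abelian_def finite_index_subgroup_def
    using group_GG sub rc finite_subset K_def by blast
qed


lemma fi_common:
  fixes q :: "int \<Rightarrow> T3"
  assumes fi: "finite_index_subgroup GG H"
    and q: "\<And>i j p. mul p (q j) = q i \<Longrightarrow> p = q (i - j)"
    and qinv: "\<And>n. tinv (q n) = q (-n)"
    and qinj: "\<And>n m. q n = q m \<Longrightarrow> n = m"
  shows "\<exists>k>0. E (q k) \<in> H"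
proof -
  interpret group GG by (rule group_GG)
  have sub: "subgroup H GG" and fin: "finite (RCOSETS GG H)"
    using fi by (auto simp: finite_index_subgroup_def)
  define f where "f i = H #>\<^bsub>GG\<^esub> E (q (int i))" for i :: nat
  have "f ` UNIV \<subseteq> RCOSETS GG H" unfolding f_def RCOSETS_def using E_in by blast
  then have "finite (f ` UNIV)" using fin finite_subset by blast
  then have "\<not> inj f" using finite_imageD by blast
  then obtain i j where ij: "i \<noteq> j" "f i = f j" unfolding inj_def by blast
  have "E (q (int i)) \<in> f i" unfolding f_def r_coset_def
    using subgroup.one_closed[OF sub] by force
  then have "E (q (int i)) \<in> H #>\<^bsub>GG\<^esub> E (q (int j))" using ij f_def by simp
  then obtain h where h: "h \<in> H" "E (q (int i)) = h \<otimes>\<^bsub>GG\<^esub> E (q (int j))"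
    unfolding r_coset_def by blast
  then have "h \<in> carrier GG" using subgroup.subset[OF sub] by blast
  then obtain p where hp: "h = E p" by (auto simp: carrier_GG)
  with h have "mul p (q (int j)) = q (int i)" by simp
  then have "p = q (int i - int j)" by (rule q)
  with h hp have in1: "E (q (int i - int j)) \<in> H" by simp
  then have "inv\<^bsub>GG\<^esub> E (q (int i - int j)) \<in> H" using subgroup.m_inv_closed[OF sub] by blast
  then have in2: "E (q (int j - int i)) \<in> H" by (simp add: qinv)
  show ?thesis
  proof (cases "i > j")
    case True then show ?thesis using in1 by (intro exI[of _ "int i - int j"]) auto
  next
    case False then show ?thesis using in2 ij by (intro exI[of _ "int j - int i"]) auto
  qed
qed

lemma fi_x: "finite_index_subgroup GG H \<Longrightarrow> \<exists>k>0. E (k,0,False) \<in> H"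
  using fi_common[of H "\<lambda>n. (n,0,False)"] by (force split: if_splits)

lemma fi_y: "finite_index_subgroup GG H \<Longrightarrow> \<exists>k>0. E (0,k,False) \<in> H"
  using fi_common[of H "\<lambda>n. (0,n,False)"] by (force split: if_splits)


lemma wl_x: "k > 0 \<Longrightarrow> word_length GG SS (E (k,0,False)) = nat k"
proof -
  assume k: "k > 0"
  have "word_length GG SS (E (k,0,False)) \<le> length (replicate (nat k) (E (1,0,False)))"
    by (rule wl_upper) (use k in \<open>auto simp: SS_def wp_rep\<close>)
  moreover have "pot (k,0,False) \<le> word_length GG SS (E (k,0,False))" by (rule wl_lower[OF W_all])
  ultimately show ?thesis using k by (simp add: pot_def)
qed

lemma wl_y: "k > 0 \<Longrightarrow> nat k + 1 \<le> word_length GG SS (E (0,k,False))"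
proof -
  assume k: "k > 0"
  have "pot (0,k,False) \<le> word_length GG SS (E (0,k,False))" by (rule wl_lower[OF W_all])
  then show ?thesis using k by (simp add: pot_def)
qed

lemma card_SS: "card SS = 3" by (simp add: SS_def)

lemma Av_eq: "Av GG SS (E (x,y,False)) =
   (2 * real (word_length GG SS (E (x,y,False))) + real (word_length GG SS (E (y,x,False)))) / 3"
  unfolding Av_def card_SS by (simp add: SS_def)

lemma curv_x: "k > 0 \<Longrightarrow> curvature GG SS (E (k,0,False)) < 0"
proof -
  assume k: "k > 0"
  define a where "a = real (word_length GG SS (E (k,0,False)))"
  define b where "b = real (word_length GG SS (E (0,k,False)))"
  have a: "a = real (nat k)" using wl_x[OF k] a_def by simp
  have b: "real (nat k) + 1 \<le> b" using wl_y[OF k] b_def by linarith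
  have "a > 0" using a k by simp
  moreover have "curvature GG SS (E (k,0,False)) = (a - (2*a+b)/3) / a"
    unfolding curvature_def Av_eq a_def b_def by simp
  ultimately show ?thesis using a b by (simp add: divide_neg_pos)
qed

lemma curv_y: "k > 0 \<Longrightarrow> curvature GG SS (E (0,k,False)) > 0"
proof -
  assume k: "k > 0"
  define a where "a = real (word_length GG SS (E (k,0,False)))"
  define b where "b = real (word_length GG SS (E (0,k,False)))"
  have a: "a = real (nat k)" using wl_x[OF k] a_def by simp
  have b: "real (nat k) + 1 \<le> b" using wl_y[OF k] b_def by linarith
  have "b > 0" using b k by linarith
  moreover have "curvature GG SS (E (0,k,False)) = (b - (2*b+a)/3) / b"
    unfolding curvature_def Av_eq a_def b_def by simp
  ultimately show ?thesis using a b by (simp add: divide_pos_pos)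
qed

theorem mainTheorem4:
  shows "\<exists>(G :: nat monoid) S. group G \<and> virtually_abelian G \<and> sym_gen_set G S \<and>
    (\<forall>H. finite_index_subgroup G H \<and> free_abelian_subgroup G H \<longrightarrow>
      (\<exists>g\<in>H. g \<noteq> \<one>\<^bsub>G\<^esub> \<and> curvature G S g > 0) \<and>
      (\<exists>g'\<in>H. g' \<noteq> \<one>\<^bsub>G\<^esub> \<and> curvature G S g' < 0))"
proof (intro exI[of _ GG] exI[of _ SS] conjI allI impI)
  show "group GG" by (rule group_GG)
  show "virtually_abelian GG" by (rule virt_ab)
  show "sym_gen_set GG SS" by (rule sym_gen_SS)
next
  fix H assume h: "finite_index_subgroup GG H \<and> free_abelian_subgroup GG H"
  from fi_y[of H] h obtain k where k: "k > 0" "E (0,k,False) \<in> H" by blast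
  then show "\<exists>g\<in>H. g \<noteq> \<one>\<^bsub>GG\<^esub> \<and> curvature GG SS g > 0"
    using curv_y[OF k(1)] by (intro bexI[of _ "E (0,k,False)"]) (auto simp: one_GG)
next
  fix H assume h: "finite_index_subgroup GG H \<and> free_abelian_subgroup GG H"
  from fi_x[of H] h obtain k where k: "k > 0" "E (k,0,False) \<in> H" by blast
  then show "\<exists>g\<in>H. g \<noteq> \<one>\<^bsub>GG\<^esub> \<and> curvature GG SS g < 0"
    using curv_x[OF k(1)] by (intro bexI[of _ "E (k,0,False)"]) (auto simp: one_GG)
qed

end
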